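(* Let $K$ be a commutative ring with identity, let $G$ be a group and $n\ge 0$. If $G$ is of type $FP_n$ over $K$ (i.e. left-$FP_n$), then $G$ is bi-$FP_n$ over $K$.
   Context: $KG$ is the group ring, with augmentation $\varepsilon:KG\to K$, $g\mapsto 1$. A module is of type $FP_n$ if there is an exact sequence $0\leftarrow M\leftarrow P_0\leftarrow\cdots\leftarrow P_n$ with $P_0,\dots,P_n$ finitely generated free modules. $G$ is of type $FP_n$ over $K$ if $K$, regarded as a left $KG$-module via $\varepsilon$, is of type $FP_n$ (for groups left and right versions coincide). A $(KG,KG)$-bimodule is an abelian group with commuting left and right $KG$-actions with $km=mk$ for $k\in K$; the free bimodule of rank $1$ is $KG\otimes_K KG$ with $a(u\otimes v)b=au\otimes vb$, and a free bimodule of rank $r$ is a direct sum of $r$ copies of it. $G$ is bi-$FP_n$ if $KG$, regarded as a $(KG,KG)$-bimodule by left and right multiplication, admits an exact sequence $0\leftarrow KG\leftarrow F_0\leftarrow\cdots\leftarrow F_n$ with $F_0,\dots,F_n$ finitely generated free $(KG,KG)$-bimodules. *)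

theory Defs
  imports "HOL-Library.Poly_Mapping" "HOL-Library.Product_Plus"
begin

text \<open>The group G is a type 'g of class group_add (group written additively, NOT
  necessarily commutative).  The group ring KG is the poly_mapping type of finitely
  supported functions with convolution product (Poly_Mapping).\<close>

type_synonym ('g, 'k) group_ring = "'g \<Rightarrow>\<^sub>0 'k"

definition augmentation :: "('g::group_add, 'k::comm_ring_1) group_ring \<Rightarrow> 'k" where
  "augmentation a = (\<Sum>x\<in>Poly_Mapping.keys a. Poly_Mapping.lookup a x)"

text \<open>Elementary tensor u \<otimes> v in KG \<otimes>_K KG, identified with K[G \<times> G].\<close>
definition tens :: "('g::group_add, 'k::comm_ring_1) group_ring \<Rightarrow> ('g, 'k) group_ring
    \<Rightarrow> ('g \<times> 'g, 'k) group_ring" where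
  "tens u v = (\<Sum>x\<in>Poly_Mapping.keys u. \<Sum>y\<in>Poly_Mapping.keys v. Poly_Mapping.single (x, y) (Poly_Mapping.lookup u x * Poly_Mapping.lookup v y))"

text \<open>Free module of rank r over a ring: vectors indexed by nat, supported in {..<r}.\<close>
definition vec :: "nat \<Rightarrow> (nat \<Rightarrow> 'r::zero) set" where
  "vec r = {v. \<forall>i\<ge>r. v i = 0}"

definition lact :: "('g::group_add, 'k::comm_ring_1) group_ring \<Rightarrow> (nat \<Rightarrow> ('g, 'k) group_ring)
    \<Rightarrow> (nat \<Rightarrow> ('g, 'k) group_ring)" where
  "lact a v = (\<lambda>i. a * v i)"

text \<open>Bimodule actions on the free bimodule (KG \<otimes>_K KG)^r:
  a (u \<otimes> v) b = a u \<otimes> v b.\<close>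
definition bl_act :: "('g::group_add, 'k::comm_ring_1) group_ring \<Rightarrow> (nat \<Rightarrow> ('g \<times> 'g, 'k) group_ring)
    \<Rightarrow> (nat \<Rightarrow> ('g \<times> 'g, 'k) group_ring)" where
  "bl_act a v = (\<lambda>i. tens a 1 * v i)"

definition br_act :: "(nat \<Rightarrow> ('g::group_add \<times> 'g, 'k::comm_ring_1) group_ring)
    \<Rightarrow> ('g, 'k) group_ring \<Rightarrow> (nat \<Rightarrow> ('g \<times> 'g, 'k) group_ring)" where
  "br_act v b = (\<lambda>i. v i * tens 1 b)"

definition left_hom :: "nat \<Rightarrow> nat \<Rightarrow> ((nat \<Rightarrow> ('g::group_add, 'k::comm_ring_1) group_ring)
    \<Rightarrow> (nat \<Rightarrow> ('g, 'k) group_ring)) \<Rightarrow> bool" where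
  "left_hom r s f \<longleftrightarrow> f ` vec r \<subseteq> vec s
     \<and> (\<forall>x\<in>vec r. \<forall>y\<in>vec r. f (\<lambda>i. x i + y i) = (\<lambda>i. f x i + f y i))
     \<and> (\<forall>a. \<forall>x\<in>vec r. f (lact a x) = lact a (f x))"

definition left_hom_K :: "nat \<Rightarrow> ((nat \<Rightarrow> ('g::group_add, 'k::comm_ring_1) group_ring) \<Rightarrow> 'k) \<Rightarrow> bool" where
  "left_hom_K r f \<longleftrightarrow>
       (\<forall>x\<in>vec r. \<forall>y\<in>vec r. f (\<lambda>i. x i + y i) = f x + f y)
     \<and> (\<forall>a. \<forall>x\<in>vec r. f (lact a x) = augmentation a * f x)"

definition bi_hom :: "nat \<Rightarrow> nat \<Rightarrow> ((nat \<Rightarrow> ('g::group_add \<times> 'g, 'k::comm_ring_1) group_ring)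
    \<Rightarrow> (nat \<Rightarrow> ('g \<times> 'g, 'k) group_ring)) \<Rightarrow> bool" where
  "bi_hom r s f \<longleftrightarrow> f ` vec r \<subseteq> vec s
     \<and> (\<forall>x\<in>vec r. \<forall>y\<in>vec r. f (\<lambda>i. x i + y i) = (\<lambda>i. f x i + f y i))
     \<and> (\<forall>a. \<forall>x\<in>vec r. f (bl_act a x) = bl_act a (f x))
     \<and> (\<forall>b. \<forall>x\<in>vec r. f (br_act x b) = br_act (f x) b)"

definition bi_hom_KG :: "nat \<Rightarrow> ((nat \<Rightarrow> ('g::group_add \<times> 'g, 'k::comm_ring_1) group_ring)
    \<Rightarrow> ('g, 'k) group_ring) \<Rightarrow> bool" where
  "bi_hom_KG r f \<longleftrightarrow>
       (\<forall>x\<in>vec r. \<forall>y\<in>vec r. f (\<lambda>i. x i + y i) = f x + f y)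
     \<and> (\<forall>a. \<forall>x\<in>vec r. f (bl_act a x) = a * f x)
     \<and> (\<forall>b. \<forall>x\<in>vec r. f (br_act x b) = f x * b)"

definition FP :: "'k::comm_ring_1 itself \<Rightarrow> 'g::group_add itself \<Rightarrow> nat \<Rightarrow> bool" where
  "FP (TYPE('k)) (TYPE('g)) n \<longleftrightarrow>
     (\<exists>(r :: nat \<Rightarrow> nat)
        (e :: (nat \<Rightarrow> ('g, 'k) group_ring) \<Rightarrow> 'k)
        (d :: nat \<Rightarrow> (nat \<Rightarrow> ('g, 'k) group_ring) \<Rightarrow> (nat \<Rightarrow> ('g, 'k) group_ring)).
        left_hom_K (r 0) e
      \<and> (\<forall>i\<in>{1..n}. left_hom (r i) (r (i - 1)) (d i))
      \<and> e ` vec (r 0) = UNIV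
      \<and> (1 \<le> n \<longrightarrow> {x \<in> vec (r 0). e x = 0} = d 1 ` vec (r 1))
      \<and> (\<forall>i\<in>{1..<n}. {x \<in> vec (r i). d i x = (\<lambda>_. 0)} = d (i + 1) ` vec (r (i + 1))))"

definition bi_FP :: "'k::comm_ring_1 itself \<Rightarrow> 'g::group_add itself \<Rightarrow> nat \<Rightarrow> bool" where
  "bi_FP (TYPE('k)) (TYPE('g)) n \<longleftrightarrow>
     (\<exists>(r :: nat \<Rightarrow> nat)
        (e :: (nat \<Rightarrow> ('g \<times> 'g, 'k) group_ring) \<Rightarrow> ('g, 'k) group_ring)
        (d :: nat \<Rightarrow> (nat \<Rightarrow> ('g \<times> 'g, 'k) group_ring) \<Rightarrow> (nat \<Rightarrow> ('g \<times> 'g, 'k) group_ring)).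
        bi_hom_KG (r 0) e
      \<and> (\<forall>i\<in>{1..n}. bi_hom (r i) (r (i - 1)) (d i))
      \<and> e ` vec (r 0) = UNIV
      \<and> (1 \<le> n \<longrightarrow> {x \<in> vec (r 0). e x = 0} = d 1 ` vec (r 1))
      \<and> (\<forall>i\<in>{1..<n}. {x \<in> vec (r i). d i x = (\<lambda>_. 0)} = d (i + 1) ` vec (r (i + 1))))"

end

theory Submission
  imports Defs
begin

lemma pm_sum_single:
  fixes p :: "'a \<Rightarrow>\<^sub>0 'b::comm_monoid_add"
  shows "p = (\<Sum>k\<in>Poly_Mapping.keys p. Poly_Mapping.single k (Poly_Mapping.lookup p k))"
proof (rule poly_mapping_eqI)
  fix x
  show "Poly_Mapping.lookup p x = Poly_Mapping.lookup (\<Sum>k\<in>Poly_Mapping.keys p. Poly_Mapping.single k (Poly_Mapping.lookup p k)) x"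
    by (simp add: lookup_sum lookup_single when_def in_keys_iff)
qed

lemma pm_induct[case_names zero single add]:
  fixes p :: "'a \<Rightarrow>\<^sub>0 'b::comm_monoid_add"
  assumes "P 0" "\<And>k v. P (Poly_Mapping.single k v)" "\<And>f g. P f \<Longrightarrow> P g \<Longrightarrow> P (f + g)"
  shows "P p"
proof -
  have "\<And>S. finite S \<Longrightarrow> P (\<Sum>k\<in>S. Poly_Mapping.single k (Poly_Mapping.lookup p k))"
  proof -
    fix S :: "'a set" assume "finite S" then show "P (\<Sum>k\<in>S. Poly_Mapping.single k (Poly_Mapping.lookup p k))"
      by (induct S rule: finite_induct) (auto intro: assms)
  qed
  then show ?thesis using pm_sum_single[of p] by (metis finite_keys)
qed

definition fib :: "('g::group_add \<times> 'g, 'k::comm_ring_1) group_ring \<Rightarrow> 'g \<Rightarrow> ('g, 'k) group_ring" where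
  "fib w x = Abs_poly_mapping (\<lambda>b. Poly_Mapping.lookup w (x + b, - b))"

lemma lookup_fib: "Poly_Mapping.lookup (fib w x) b = Poly_Mapping.lookup w (x + b, - b)"
proof -
  have "{b. Poly_Mapping.lookup w (x + b, - b) \<noteq> 0} \<subseteq> (\<lambda>p. - snd p) ` Poly_Mapping.keys w"
    by (auto simp: in_keys_iff image_iff intro!: bexI[of _ "(x + _, - _)"])
  then have "finite {b. Poly_Mapping.lookup w (x + b, - b) \<noteq> 0}"
    by (rule finite_subset) simp
  then show ?thesis unfolding fib_def by simp
qed

lemma fib_add: "fib (v + w) x = fib v x + fib w x"
  by (rule poly_mapping_eqI) (simp add: lookup_fib lookup_add)

lemma fib_zero[simp]: "fib 0 x = 0"
  by (rule poly_mapping_eqI) (simp add: lookup_fib)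

lemma fib_sum: "fib (\<Sum>i\<in>S. f i) x = (\<Sum>i\<in>S. fib (f i) x)"
  by (induct S rule: infinite_finite_induct) (auto simp: fib_add)

lemma fib_single: "fib (Poly_Mapping.single (g, h) c) x = (if x = g + h then Poly_Mapping.single (- h) c else 0)"
proof (rule poly_mapping_eqI)
  fix b
  have "(x + b = g \<and> - b = h) \<longleftrightarrow> (x = g + h \<and> b = - h)"
  proof
    assume "x + b = g \<and> - b = h"
    then show "x = g + h \<and> b = - h" by (auto simp: add.assoc)
  next
    assume "x = g + h \<and> b = - h"
    then show "x + b = g \<and> - b = h" by (auto simp: add.assoc)
  qed
  then show "Poly_Mapping.lookup (fib (Poly_Mapping.single (g, h) c) x) b =
    Poly_Mapping.lookup (if x = g + h then Poly_Mapping.single (- h) c else 0) b"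
    by (auto simp: lookup_fib lookup_single when_def)
qed

lemma fib_eq:
  assumes "\<And>x. fib v x = fib w x" shows "v = w"
proof (rule poly_mapping_eqI)
  fix p :: "'a \<times> 'a"
  obtain g h where p: "p = (g, h)" by fastforce
  have "Poly_Mapping.lookup (fib v (g + h)) (- h) = Poly_Mapping.lookup (fib w (g + h)) (- h)"
    using assms by simp
  then show "Poly_Mapping.lookup v p = Poly_Mapping.lookup w p"
    by (simp add: lookup_fib p add.assoc)
qed

lemma fib_eq0_iff: "w = 0 \<longleftrightarrow> (\<forall>x. fib w x = 0)"
  using fib_eq[of w 0] by auto

definition rm :: "('g::group_add \<times> 'g, 'k::comm_ring_1) group_ring \<Rightarrow> ('g, 'k) group_ring \<Rightarrow> ('g \<times> 'g, 'k) group_ring" where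
  "rm w D = (\<Sum>a\<in>Poly_Mapping.keys D. Poly_Mapping.single (0, - a) (Poly_Mapping.lookup D a) * w * Poly_Mapping.single (a, 0) 1)"

lemma rm_superset:
  assumes "finite S" "Poly_Mapping.keys D \<subseteq> S"
  shows "rm w D = (\<Sum>a\<in>S. Poly_Mapping.single (0, - a) (Poly_Mapping.lookup D a) * w * Poly_Mapping.single (a, 0) 1)"
  unfolding rm_def
  by (rule sum.mono_neutral_left) (use assms in \<open>auto simp: in_keys_iff\<close>)

lemma rm_add2: "rm w (D + E) = rm w D + rm w E"
proof -
  let ?S = "Poly_Mapping.keys D \<union> Poly_Mapping.keys E"
  have "Poly_Mapping.keys (D + E) \<subseteq> ?S" by (rule keys_add)
  then show ?thesis
    by (simp add: rm_superset[of ?S] lookup_add single_add distrib_left distrib_right sum.distrib)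
qed

lemma rm_zero2[simp]: "rm w 0 = 0"
  by (simp add: rm_def)

lemma rm_single2: "rm w (Poly_Mapping.single a c) = Poly_Mapping.single (0, - a) c * w * Poly_Mapping.single (a, 0) 1"
  by (simp add: rm_def)

lemma rm_sum2: "rm w (\<Sum>i\<in>S. f i) = (\<Sum>i\<in>S. rm w (f i))"
  by (induct S rule: infinite_finite_induct) (auto simp: rm_add2)

lemma rm_add1: "rm (v + w) D = rm v D + rm w D"
  by (simp add: rm_def distrib_left distrib_right sum.distrib)

lemma rm_zero1[simp]: "rm 0 D = 0"
  by (simp add: rm_def)

lemma rm_sum1: "rm (\<Sum>i\<in>S. f i) D = (\<Sum>i\<in>S. rm (f i) D)"
  by (induct S rule: infinite_finite_induct) (auto simp: rm_add1)

lemma fib_rm_single: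
  "fib (Poly_Mapping.single (0, - a) c * w * Poly_Mapping.single (a, 0) 1) x = fib w x * Poly_Mapping.single a c"
proof (induct w rule: pm_induct)
  case zero then show ?case by simp
next
  case (single k v)
  obtain g h where k: "k = (g, h)" by fastforce
  have "g + a + (- a + h) = g + h" by (simp add: add.assoc)
  then show ?case
    by (simp add: k mult_single fib_single minus_add mult.commute)
next
  case (add f g) then show ?case by (simp add: distrib_left distrib_right fib_add)
qed

lemma fib_rm: "fib (rm w D) x = fib w x * D"
proof -
  have "fib w x * D = fib w x * (\<Sum>k\<in>Poly_Mapping.keys D. Poly_Mapping.single k (Poly_Mapping.lookup D k))"
    using pm_sum_single[of D] by simp
  then show ?thesis
    by (simp add: rm_def fib_sum fib_rm_single sum_distrib_left)
qed

lemma fib_single0: "fib (Poly_Mapping.single (x', 0) 1) x = (if x = x' then 1 else 0)"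
  by (simp add: fib_single)

lemma tens_l: "tens a 1 = (\<Sum>x\<in>Poly_Mapping.keys a. Poly_Mapping.single (x, 0) (Poly_Mapping.lookup a x))"
  by (simp add: tens_def)

lemma tens_r: "tens 1 b = (\<Sum>y\<in>Poly_Mapping.keys b. Poly_Mapping.single (0, y) (Poly_Mapping.lookup b y))"
  by (simp add: tens_def)

lemma tens_l_comm: "Poly_Mapping.single (0, y) c * tens a 1 = tens a 1 * Poly_Mapping.single (0, y) c"
  by (simp add: tens_l sum_distrib_left sum_distrib_right mult_single mult.commute)

lemma tens_r_comm: "Poly_Mapping.single (z, 0) c * tens 1 b = tens 1 b * Poly_Mapping.single (z, 0) c"
  by (simp add: tens_r sum_distrib_left sum_distrib_right mult_single mult.commute)

lemma rm_tensl: "rm (tens a 1 * w) D = tens a 1 * rm w D"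
proof -
  have "tens a 1 * (Poly_Mapping.single (0, y) c * v) = Poly_Mapping.single (0, y) c * (tens a 1 * v)" for y c v
    by (simp add: tens_l_comm flip: mult.assoc)
  then show ?thesis by (simp add: rm_def sum_distrib_left mult.assoc)
qed

lemma rm_tensr: "rm (w * tens 1 b) D = rm w D * tens 1 b"
  by (simp add: rm_def sum_distrib_right mult.assoc tens_r_comm)


lemma aug_superset:
  assumes "finite S" "Poly_Mapping.keys a \<subseteq> S"
  shows "augmentation a = (\<Sum>x\<in>S. Poly_Mapping.lookup a x)"
  unfolding augmentation_def
  by (rule sum.mono_neutral_left) (use assms in \<open>auto simp: in_keys_iff\<close>)

lemma aug_add: "augmentation (a + b) = augmentation a + augmentation (b :: ('g::group_add, 'k::comm_ring_1) group_ring)"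
proof -
  let ?S = "Poly_Mapping.keys a \<union> Poly_Mapping.keys b"
  have "Poly_Mapping.keys (a + b) \<subseteq> ?S" by (rule keys_add)
  then show ?thesis
    by (simp add: aug_superset[of ?S] lookup_add sum.distrib)
qed

lemma aug_zero[simp]: "augmentation (0 :: ('g::group_add, 'k::comm_ring_1) group_ring) = 0"
  by (simp add: augmentation_def)

lemma aug_single[simp]: "augmentation (Poly_Mapping.single x c :: ('g::group_add, 'k::comm_ring_1) group_ring) = c"
  by (simp add: augmentation_def)

definition mu :: "('g::group_add \<times> 'g, 'k::comm_ring_1) group_ring \<Rightarrow> ('g, 'k) group_ring" where
  "mu w = Abs_poly_mapping (\<lambda>x. augmentation (fib w x))"

lemma lookup_mu: "Poly_Mapping.lookup (mu w) x = augmentation (fib w x)"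
proof -
  have "{x. augmentation (fib w x) \<noteq> 0} \<subseteq> (\<lambda>p. fst p + snd p) ` Poly_Mapping.keys w"
  proof
    fix x assume "x \<in> {x. augmentation (fib w x) \<noteq> 0}"
    then have "fib w x \<noteq> 0" by auto
    then obtain b where "Poly_Mapping.lookup (fib w x) b \<noteq> 0"
      by (metis poly_mapping_eqI lookup_zero)
    then have "(x + b, - b) \<in> Poly_Mapping.keys w" by (simp add: lookup_fib in_keys_iff)
    moreover have "x = fst (x + b, - b) + snd (x + b, - b)" by (simp add: add.assoc)
    ultimately show "x \<in> (\<lambda>p. fst p + snd p) ` Poly_Mapping.keys w" by blast
  qed
  then have "finite {x. augmentation (fib w x) \<noteq> 0}"
    by (rule finite_subset) simp
  then show ?thesis unfolding mu_def by simp
qed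

lemma mu_add: "mu (v + w) = mu v + mu w"
  by (rule poly_mapping_eqI) (simp add: lookup_mu lookup_add fib_add aug_add)

lemma mu_zero[simp]: "mu 0 = 0"
  by (rule poly_mapping_eqI) (simp add: lookup_mu)

lemma mu_sum: "mu (\<Sum>i\<in>S. f i) = (\<Sum>i\<in>S. mu (f i))"
  by (induct S rule: infinite_finite_induct) (auto simp: mu_add)

lemma mu_single: "mu (Poly_Mapping.single (g, h) c) = Poly_Mapping.single (g + h) c"
  by (rule poly_mapping_eqI) (simp add: lookup_mu fib_single lookup_single when_def)

lemma mu_single_l: "mu (Poly_Mapping.single (z, 0) c * w) = Poly_Mapping.single z c * mu w"
proof (induct w rule: pm_induct)
  case zero then show ?case by simp
next
  case (single k v)
  obtain g h where k: "k = (g, h)" by fastforce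
  show ?case by (simp add: k mult_single mu_single add.assoc)
next
  case (add f g) then show ?case by (simp add: distrib_left mu_add)
qed

lemma mu_single_r: "mu (w * Poly_Mapping.single (0, z) c) = mu w * Poly_Mapping.single z c"
proof (induct w rule: pm_induct)
  case zero then show ?case by simp
next
  case (single k v)
  obtain g h where k: "k = (g, h)" by fastforce
  show ?case by (simp add: k mult_single mu_single add.assoc)
next
  case (add f g) then show ?case by (simp add: distrib_right mu_add)
qed

lemma mu_tensl: "mu (tens a 1 * w) = a * mu w"
proof -
  have "a * mu w = (\<Sum>k\<in>Poly_Mapping.keys a. Poly_Mapping.single k (Poly_Mapping.lookup a k)) * mu w"
    using pm_sum_single[of a] by simp
  then show ?thesis by (simp add: tens_l sum_distrib_right mu_sum mu_single_l)
qed

lemma mu_tensr: "mu (w * tens 1 b) = mu w * b"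
proof -
  have "mu w * b = mu w * (\<Sum>k\<in>Poly_Mapping.keys b. Poly_Mapping.single k (Poly_Mapping.lookup b k))"
    using pm_sum_single[of b] by simp
  then show ?thesis by (simp add: tens_r sum_distrib_left mu_sum mu_single_r)
qed

lemma single0_central: "Poly_Mapping.single 0 c * (p :: ('g::group_add, 'k::comm_ring_1) group_ring) = p * Poly_Mapping.single 0 c"
proof (induct p rule: pm_induct)
  case zero then show ?case by simp
next
  case (single k v) then show ?case by (simp add: mult_single mult.commute)
next
  case (add f g) then show ?case by (simp add: distrib_left distrib_right)
qed

lemma lookup_mult_single0: "Poly_Mapping.lookup (p * Poly_Mapping.single 0 c) x = Poly_Mapping.lookup (p :: ('g::group_add, 'k::comm_ring_1) group_ring) x * c"
proof (induct p rule: pm_induct)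
  case zero then show ?case by simp
next
  case (single k v) then show ?case by (simp add: mult_single lookup_single when_def)
next
  case (add f g) then show ?case by (simp add: distrib_right lookup_add)
qed


definition ej :: "nat \<Rightarrow> nat \<Rightarrow> ('g::group_add, 'k::comm_ring_1) group_ring" where
  "ej j = (\<lambda>k. if k = j then 1 else 0)"

definition mat :: "((nat \<Rightarrow> ('g::group_add, 'k::comm_ring_1) group_ring) \<Rightarrow> (nat \<Rightarrow> ('g, 'k) group_ring))
   \<Rightarrow> nat \<Rightarrow> nat \<Rightarrow> ('g, 'k) group_ring" where
  "mat d j k = d (ej j) k"

definition psi :: "nat \<Rightarrow> ((nat \<Rightarrow> ('g::group_add, 'k::comm_ring_1) group_ring) \<Rightarrow> (nat \<Rightarrow> ('g, 'k) group_ring))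
   \<Rightarrow> (nat \<Rightarrow> ('g \<times> 'g, 'k) group_ring) \<Rightarrow> (nat \<Rightarrow> ('g \<times> 'g, 'k) group_ring)" where
  "psi r d V = (\<lambda>k. \<Sum>j<r. rm (V j) (mat d j k))"

definition eps :: "nat \<Rightarrow> ((nat \<Rightarrow> ('g::group_add, 'k::comm_ring_1) group_ring) \<Rightarrow> 'k)
   \<Rightarrow> (nat \<Rightarrow> ('g \<times> 'g, 'k) group_ring) \<Rightarrow> ('g, 'k) group_ring" where
  "eps r e W = (\<Sum>j<r. mu (W j) * Poly_Mapping.single 0 (e (ej j)))"

definition fibv :: "(nat \<Rightarrow> ('g::group_add \<times> 'g, 'k::comm_ring_1) group_ring) \<Rightarrow> 'g \<Rightarrow> (nat \<Rightarrow> ('g, 'k) group_ring)" where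
  "fibv W x = (\<lambda>j. fib (W j) x)"

lemma ej_vec: "j < r \<Longrightarrow> ej j \<in> vec r"
  by (simp add: ej_def vec_def)

lemma zero_vec[simp]: "(\<lambda>_. 0) \<in> vec r"
  by (simp add: vec_def)

lemma fibv_vec: "W \<in> vec r \<Longrightarrow> fibv W x \<in> vec r"
  by (simp add: vec_def fibv_def)

lemma left_hom_zero:
  assumes "left_hom r s d" shows "d (\<lambda>_. 0) = (\<lambda>_. 0)"
proof -
  have h: "\<forall>x\<in>vec r. \<forall>y\<in>vec r. d (\<lambda>i. x i + y i) = (\<lambda>i. d x i + d y i)"
    using assms by (simp add: left_hom_def)
  have "d (\<lambda>i. 0 + 0) = (\<lambda>i. d (\<lambda>_. 0) i + d (\<lambda>_. 0) i)"
    using h[rule_format, OF zero_vec zero_vec] .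
  then have "d (\<lambda>_. 0) = (\<lambda>i. d (\<lambda>_. 0) i + d (\<lambda>_. 0) i)" by simp
  then show ?thesis by (metis add_cancel_right_right)
qed

lemma left_hom_K_zero:
  assumes "left_hom_K r e" shows "e (\<lambda>_. 0) = 0"
proof -
  have h: "\<forall>x\<in>vec r. \<forall>y\<in>vec r. e (\<lambda>i. x i + y i) = e x + e y"
    using assms by (simp add: left_hom_K_def)
  have "e (\<lambda>i. 0 + 0) = e (\<lambda>_. 0) + e (\<lambda>_. 0)"
    using h[rule_format, OF zero_vec zero_vec] .
  then show ?thesis by simp
qed

lemma vec_decomp:
  assumes "x \<in> vec r" shows "x = (\<lambda>k. \<Sum>j<r. x j * ej j k)"
proof
  fix k show "x k = (\<Sum>j<r. x j * ej j k)"
  proof (cases "k < r")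
    case True
    have "(\<Sum>j<r. x j * ej j k) = (\<Sum>j<r. if j = k then x j else 0)"
      by (rule sum.cong) (auto simp: ej_def)
    then show ?thesis using True by simp
  next
    case False then show ?thesis using assms by (auto simp: ej_def vec_def)
  qed
qed

lemma partial_vec:
  assumes "S \<subseteq> {..<r}" shows "(\<lambda>k. \<Sum>j\<in>S. x j * ej j k) \<in> vec r"
  using assms by (auto simp: vec_def ej_def intro!: sum.neutral)

lemma left_hom_mat:
  assumes hom: "left_hom r s d" and x: "x \<in> vec r"
  shows "d x = (\<lambda>k. \<Sum>j<r. x j * mat d j k)"
proof -
  have "S \<subseteq> {..<r} \<Longrightarrow> d (\<lambda>k. \<Sum>j\<in>S. x j * ej j k) = (\<lambda>k. \<Sum>j\<in>S. x j * mat d j k)" for S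
  proof (induct S rule: infinite_finite_induct)
    case (infinite S) then show ?case using left_hom_zero[OF hom] by simp
  next
    case empty then show ?case using left_hom_zero[OF hom] by simp
  next
    case (insert j S)
    have jr: "j < r" using insert by auto
    have A: "lact (x j) (ej j) \<in> vec r" using jr by (simp add: lact_def vec_def ej_def)
    have B: "(\<lambda>k. \<Sum>j\<in>S. x j * ej j k) \<in> vec r" using insert by (intro partial_vec) auto
    have eq: "(\<lambda>k. \<Sum>j\<in>insert j S. x j * ej j k) = (\<lambda>k. lact (x j) (ej j) k + (\<lambda>k. \<Sum>j\<in>S. x j * ej j k) k)"
      using insert by (simp add: lact_def)
    have "d (\<lambda>k. \<Sum>j\<in>insert j S. x j * ej j k) = (\<lambda>k. d (lact (x j) (ej j)) k + d (\<lambda>k. \<Sum>j\<in>S. x j * ej j k) k)"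
      unfolding eq using hom unfolding left_hom_def using A B by (simp only: ball_simps)
    also have "d (lact (x j) (ej j)) = lact (x j) (d (ej j))"
      using hom unfolding left_hom_def using ej_vec[OF jr] by blast
    finally show ?case using insert by (simp add: lact_def mat_def)
  qed
  then have "d (\<lambda>k. \<Sum>j<r. x j * ej j k) = (\<lambda>k. \<Sum>j<r. x j * mat d j k)" by blast
  then show ?thesis using vec_decomp[OF x] by simp
qed

lemma left_hom_K_mat:
  assumes hom: "left_hom_K r e" and x: "x \<in> vec r"
  shows "e x = (\<Sum>j<r. augmentation (x j) * e (ej j))"
proof -
  have "S \<subseteq> {..<r} \<Longrightarrow> e (\<lambda>k. \<Sum>j\<in>S. x j * ej j k) = (\<Sum>j\<in>S. augmentation (x j) * e (ej j))" for S
  proof (induct S rule: infinite_finite_induct)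
    case (infinite S) then show ?case using left_hom_K_zero[OF hom] by simp
  next
    case empty then show ?case using left_hom_K_zero[OF hom] by simp
  next
    case (insert j S)
    have jr: "j < r" using insert by auto
    have A: "lact (x j) (ej j) \<in> vec r" using jr by (simp add: lact_def vec_def ej_def)
    have B: "(\<lambda>k. \<Sum>j\<in>S. x j * ej j k) \<in> vec r" using insert by (intro partial_vec) auto
    have eq: "(\<lambda>k. \<Sum>j\<in>insert j S. x j * ej j k) = (\<lambda>k. lact (x j) (ej j) k + (\<lambda>k. \<Sum>j\<in>S. x j * ej j k) k)"
      using insert by (simp add: lact_def)
    have "e (\<lambda>k. \<Sum>j\<in>insert j S. x j * ej j k) = e (lact (x j) (ej j)) + e (\<lambda>k. \<Sum>j\<in>S. x j * ej j k)"
      unfolding eq using hom unfolding left_hom_K_def using A B by (simp only: ball_simps)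
    also have "e (lact (x j) (ej j)) = augmentation (x j) * e (ej j)"
      using hom unfolding left_hom_K_def using ej_vec[OF jr] by blast
    finally show ?case using insert by simp
  qed
  then have "e (\<lambda>k. \<Sum>j<r. x j * ej j k) = (\<Sum>j<r. augmentation (x j) * e (ej j))" by blast
  then show ?thesis using vec_decomp[OF x] by simp
qed

lemma fibv_psi:
  assumes hom: "left_hom r s d" and V: "V \<in> vec r"
  shows "fibv (psi r d V) x = d (fibv V x)"
  using left_hom_mat[OF hom fibv_vec[OF V, of x]]
  by (simp add: fibv_def psi_def fib_sum fib_rm)

lemma lookup_eps:
  assumes hom: "left_hom_K r e" and W: "W \<in> vec r"
  shows "Poly_Mapping.lookup (eps r e W) x = e (fibv W x)"
  using left_hom_K_mat[OF hom fibv_vec[OF W, of x]]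
  by (simp add: eps_def lookup_sum lookup_mult_single0 lookup_mu fibv_def)

lemma mat_zero:
  assumes hom: "left_hom r s d" and "j < r" "s \<le> k"
  shows "mat d j k = 0"
proof -
  have "d (ej j) \<in> vec s" using hom ej_vec[OF assms(2)] unfolding left_hom_def by blast
  then show ?thesis using assms(3) by (simp add: mat_def vec_def)
qed

lemma psi_vec:
  assumes hom: "left_hom r s d" shows "psi r d V \<in> vec s"
  using mat_zero[OF hom] by (simp add: psi_def vec_def)

lemma psi_bi_hom:
  assumes hom: "left_hom r s d" shows "bi_hom r s (psi r d)"
  unfolding bi_hom_def
  using psi_vec[OF hom]
  by (auto simp: psi_def rm_add1 sum.distrib bl_act_def br_act_def rm_tensl rm_tensr sum_distrib_left sum_distrib_right)

lemma eps_bi_hom_KG: "bi_hom_KG r (eps r e)"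
  unfolding bi_hom_KG_def
  by (auto simp: eps_def mu_add distrib_right sum.distrib bl_act_def br_act_def mu_tensl mu_tensr
      sum_distrib_left sum_distrib_right mult.assoc single0_central)


lemma fib_outside:
  assumes "x \<notin> (\<lambda>p. fst p + snd p) ` Poly_Mapping.keys w"
  shows "fib w x = 0"
proof (rule poly_mapping_eqI)
  fix b
  show "Poly_Mapping.lookup (fib w x) b = Poly_Mapping.lookup 0 b"
  proof (rule ccontr)
    assume "Poly_Mapping.lookup (fib w x) b \<noteq> Poly_Mapping.lookup 0 b"
    then have "(x + b, - b) \<in> Poly_Mapping.keys w" by (simp add: lookup_fib in_keys_iff)
    moreover have "x = fst (x + b, - b) + snd (x + b, - b)" by (simp add: add.assoc)
    ultimately show False using assms by blast
  qed
qed

lemma lift_exact: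
  fixes d :: "(nat \<Rightarrow> ('g::group_add, 'k::comm_ring_1) group_ring) \<Rightarrow> (nat \<Rightarrow> ('g, 'k) group_ring)"
    and \<phi> :: "(nat \<Rightarrow> ('g, 'k) group_ring) \<Rightarrow> 'z"
    and \<Phi> :: "(nat \<Rightarrow> ('g \<times> 'g, 'k) group_ring) \<Rightarrow> 'y"
  assumes hom: "left_hom s t d"
    and ex: "{y \<in> vec t. \<phi> y = z0} = d ` vec s"
    and iff: "\<And>W. W \<in> vec t \<Longrightarrow> (\<Phi> W = Z0 \<longleftrightarrow> (\<forall>x. \<phi> (fibv W x) = z0))"
  shows "{W \<in> vec t. \<Phi> W = Z0} = psi s d ` vec s"
proof
  show "psi s d ` vec s \<subseteq> {W \<in> vec t. \<Phi> W = Z0}"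
  proof clarify
    fix V :: "nat \<Rightarrow> ('g \<times> 'g, 'k) group_ring" assume V: "V \<in> vec s"
    have "\<phi> (fibv (psi s d V) x) = z0" for x
    proof -
      have "d (fibv V x) \<in> d ` vec s" using fibv_vec[OF V] by blast
      then show ?thesis using ex fibv_psi[OF hom V] by auto
    qed
    then show "psi s d V \<in> vec t \<and> \<Phi> (psi s d V) = Z0"
      using iff[OF psi_vec[OF hom]] psi_vec[OF hom] by blast
  qed
next
  show "{W \<in> vec t. \<Phi> W = Z0} \<subseteq> psi s d ` vec s"
  proof (rule subsetI)
    fix W assume "W \<in> {W \<in> vec t. \<Phi> W = Z0}"
    then have W: "W \<in> vec t" and Z: "\<Phi> W = Z0" by auto
    have "\<forall>x. \<exists>V. V \<in> vec s \<and> fibv W x = d V"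
    proof
      fix x
      have "fibv W x \<in> {y \<in> vec t. \<phi> y = z0}" using iff[OF W] Z fibv_vec[OF W] by blast
      then show "\<exists>V. V \<in> vec s \<and> fibv W x = d V" using ex by blast
    qed
    then obtain Vx where "\<forall>x. Vx x \<in> vec s \<and> fibv W x = d (Vx x)" by (rule choice[THEN exE])
    then have Vx: "\<And>x. Vx x \<in> vec s" "\<And>x. fibv W x = d (Vx x)" by auto
    define X where "X = (\<lambda>p. fst p + snd p) ` (\<Union>j<t. Poly_Mapping.keys (W j))"
    have finX: "finite X" unfolding X_def by simp
    define V' where "V' = (\<lambda>j. \<Sum>x\<in>X. rm (Poly_Mapping.single (x, 0) 1) (Vx x j))"
    have V'vec: "V' \<in> vec s"
      using Vx(1) by (simp add: V'_def vec_def)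
    have fibV': "fibv V' y = (if y \<in> X then Vx y else (\<lambda>_. 0))" for y
    proof
      fix j
      have "fibv V' y j = (\<Sum>x\<in>X. (if y = x then 1 else 0) * Vx x j)"
        by (simp add: fibv_def V'_def fib_sum fib_rm fib_single0)
      also have "\<dots> = (\<Sum>x\<in>X. (if y = x then Vx x j else 0))"
        by (rule sum.cong) auto
      also have "\<dots> = (if y \<in> X then Vx y j else 0)"
        using finX by (simp add: sum.delta)
      finally show "fibv V' y j = (if y \<in> X then Vx y else (\<lambda>_. 0)) j" by simp
    qed
    have "psi s d V' = W"
    proof
      fix k
      show "psi s d V' k = W k"
      proof (rule fib_eq)
        fix y
        have "fib (psi s d V' k) y = d (fibv V' y) k"
          using fibv_psi[OF hom V'vec, of y] by (simp add: fibv_def fun_eq_iff)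
        also have "\<dots> = fib (W k) y"
        proof (cases "y \<in> X")
          case True
          then show ?thesis using fibV' Vx(2)[of y] by (simp add: fibv_def fun_eq_iff)
        next
          case False
          have "fib (W k) y = 0"
          proof (cases "k < t")
            case True
            then show ?thesis using False by (intro fib_outside) (auto simp: X_def)
          next
            case False
            then show ?thesis using W by (simp add: vec_def)
          qed
          then show ?thesis using False fibV' left_hom_zero[OF hom] by simp
        qed
        finally show "fib (psi s d V' k) y = fib (W k) y" .
      qed
    qed
    then show "W \<in> psi s d ` vec s" using V'vec by blast
  qed
qed

lemma eps_iff:
  assumes hom: "left_hom_K r e" and W: "W \<in> vec r"
  shows "eps r e W = 0 \<longleftrightarrow> (\<forall>x. e (fibv W x) = 0)"
  using lookup_eps[OF hom W] by (metis lookup_zero poly_mapping_eqI)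

lemma psi_iff:
  assumes hom: "left_hom r s d" and W: "W \<in> vec r"
  shows "psi r d W = (\<lambda>_. 0) \<longleftrightarrow> (\<forall>x. d (fibv W x) = (\<lambda>_. 0))"
proof -
  have "psi r d W = (\<lambda>_. 0) \<longleftrightarrow> (\<forall>k. \<forall>x. fib (psi r d W k) x = 0)"
    using fib_eq0_iff by (auto simp: fun_eq_iff)
  also have "\<dots> \<longleftrightarrow> (\<forall>x. \<forall>k. fibv (psi r d W) x k = 0)"
    by (auto simp: fibv_def)
  also have "\<dots> \<longleftrightarrow> (\<forall>x. d (fibv W x) = (\<lambda>_. 0))"
    by (simp add: fibv_psi[OF hom W] fun_eq_iff)
  finally show ?thesis .
qed

lemma eps_surj:
  fixes e :: "(nat \<Rightarrow> ('g::group_add, 'k::comm_ring_1) group_ring) \<Rightarrow> 'k"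
  assumes hom: "left_hom_K r e" and su: "e ` vec r = UNIV"
  shows "eps r e ` vec r = UNIV"
proof -
  obtain x0 where x0: "x0 \<in> vec r" "e x0 = 1" using su by (metis UNIV_I imageE)
  define W0 where "W0 = (\<lambda>j. rm 1 (x0 j))"
  have W0: "W0 \<in> vec r" using x0(1) by (simp add: W0_def vec_def)
  have one_eq: "(1 :: ('g \<times> 'g, 'k) group_ring) = Poly_Mapping.single (0, 0) 1"
    by (metis single_one zero_prod_def)
  have f1: "fib (1 :: ('g \<times> 'g, 'k) group_ring) x = (if x = 0 then 1 else 0)" for x
    unfolding one_eq by (rule fib_single0)
  have "eps r e W0 = 1"
  proof (rule poly_mapping_eqI)
    fix x
    have "fibv W0 x = (if x = 0 then x0 else (\<lambda>_. 0))"
      by (simp add: fibv_def W0_def fib_rm f1 fun_eq_iff)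
    then show "Poly_Mapping.lookup (eps r e W0) x = Poly_Mapping.lookup 1 x"
      using lookup_eps[OF hom W0, of x] x0(2) left_hom_K_zero[OF hom]
      by (simp add: lookup_one when_def)
  qed
  have "t \<in> eps r e ` vec r" for t
  proof -
    have "bl_act t W0 \<in> vec r" using W0 by (simp add: bl_act_def vec_def)
    moreover have "eps r e (bl_act t W0) = t * eps r e W0"
      using eps_bi_hom_KG[of r e] W0 unfolding bi_hom_KG_def by blast
    ultimately show ?thesis using \<open>eps r e W0 = 1\<close> by force
  qed
  then show ?thesis by blast
qed

theorem theorem2:
  fixes n :: nat
  assumes "FP TYPE('k::comm_ring_1) TYPE('g::group_add) n"
  shows "bi_FP TYPE('k) TYPE('g) n"
proof -
  obtain r and e :: "(nat \<Rightarrow> ('g, 'k) group_ring) \<Rightarrow> 'k"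
    and d :: "nat \<Rightarrow> (nat \<Rightarrow> ('g, 'k) group_ring) \<Rightarrow> (nat \<Rightarrow> ('g, 'k) group_ring)" where
    h0: "left_hom_K (r 0) e" and
    h1: "\<forall>i\<in>{1..n}. left_hom (r i) (r (i - 1)) (d i)" and
    h2: "e ` vec (r 0) = UNIV" and
    h3: "1 \<le> n \<longrightarrow> {x \<in> vec (r 0). e x = 0} = d 1 ` vec (r 1)" and
    h4: "\<forall>i\<in>{1..<n}. {x \<in> vec (r i). d i x = (\<lambda>_. 0)} = d (i + 1) ` vec (r (i + 1))"
  proof -
    from assms[unfolded FP_def] obtain r and e :: "(nat \<Rightarrow> ('g, 'k) group_ring) \<Rightarrow> 'k"
      and d :: "nat \<Rightarrow> (nat \<Rightarrow> ('g, 'k) group_ring) \<Rightarrow> (nat \<Rightarrow> ('g, 'k) group_ring)" where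
      "left_hom_K (r 0) e \<and> (\<forall>i\<in>{1..n}. left_hom (r i) (r (i - 1)) (d i)) \<and> e ` vec (r 0) = UNIV \<and>
       (1 \<le> n \<longrightarrow> {x \<in> vec (r 0). e x = 0} = d 1 ` vec (r 1)) \<and>
       (\<forall>i\<in>{1..<n}. {x \<in> vec (r i). d i x = (\<lambda>_. 0)} = d (i + 1) ` vec (r (i + 1)))"
      by (elim exE)
    then show thesis using that by (elim conjE)
  qed
  define E where "E = eps (r 0) e"
  define D where "D = (\<lambda>i. psi (r i) (d i))"
  have g0: "bi_hom_KG (r 0) E" unfolding E_def by (rule eps_bi_hom_KG)
  have g1: "\<forall>i\<in>{1..n}. bi_hom (r i) (r (i - 1)) (D i)"
    using h1 psi_bi_hom unfolding D_def by blast
  have g2: "E ` vec (r 0) = UNIV" unfolding E_def by (rule eps_surj[OF h0 h2])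
  have g3: "1 \<le> n \<longrightarrow> {x \<in> vec (r 0). E x = 0} = D 1 ` vec (r 1)"
  proof
    assume n: "1 \<le> n"
    have hom1: "left_hom (r 1) (r 0) (d 1)" using h1 n by force
    show "{x \<in> vec (r 0). E x = 0} = D 1 ` vec (r 1)"
      unfolding E_def D_def
      by (rule lift_exact[OF hom1 h3[rule_format, OF n]]) (rule eps_iff[OF h0])
  qed
  have g4: "\<forall>i\<in>{1..<n}. {x \<in> vec (r i). D i x = (\<lambda>_. 0)} = D (i + 1) ` vec (r (i + 1))"
  proof
    fix i assume i: "i \<in> {1..<n}"
    have homi: "left_hom (r i) (r (i - 1)) (d i)" using h1 i by force
    have homi1: "left_hom (r (i + 1)) (r i) (d (i + 1))" using h1[rule_format, of "i + 1"] i by force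
    show "{x \<in> vec (r i). D i x = (\<lambda>_. 0)} = D (i + 1) ` vec (r (i + 1))"
      unfolding D_def
      by (rule lift_exact[OF homi1 h4[rule_format, OF i]]) (rule psi_iff[OF homi])
  qed
  show ?thesis unfolding bi_FP_def
    by (intro exI[of _ r] exI[of _ E] exI[of _ D] conjI g0 g1 g2 g3 g4)
qed

end
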